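(* An $[n,k]_q$ code $C$ is GI-reducible if and only if $C$ is LCD, or $\dim(\mathrm{Hull}(C)) = 1$ and $x \in \mathrm{Hull}(C)$ satisfies $(x,\mathbf{1}) \neq 0$.
   Context: Let $\mathbb{F}_q$ be a finite field and $C \subseteq \mathbb{F}_q^n$ a linear $[n,k]_q$ code. $(x,y)=\sum_i x_i y_i$ denotes the standard inner product, $\mathbf{1}$ the all-ones vector, $C^\perp$ the dual code with respect to the standard inner product, and $\mathrm{Hull}(C) = C \cap C^\perp$ the hull of $C$; $C$ is LCD if $\mathrm{Hull}(C)=\{0\}$. For a nondegenerate symmetric matrix $M$, a code $C$ with generator matrix $G$ is $M$-LCD if $GMG^T$ is nonsingular, and then $\Pi_{C,M} = MG^T(GMG^T)^{-1}G$ is its $M$-orthogonal projector. Two codes are permutation-equivalent ($C_1 \cong C_2$) if $C_2 = C_1P$ for a permutation matrix $P$, and $\Pi_{C_1,M} \cong \Pi_{C_2,M}$ means $\Pi_{C_2,M} = P^T\Pi_{C_1,M}P$ for some permutation matrix $P$. Let $J$ be the all-ones matrix. A code $C$ is called GI-reducible if there exists a nondegenerate symmetric structure matrix $M = aI + bJ$ (i.e. $a \neq 0$ and $a+nb \neq 0$ in $\mathbb{F}_q$) such that every code in the permutation class of $C$ is $M$-LCD and $C_1 \cong C_2 \iff \Pi_{C_1,M} \cong \Pi_{C_2,M}$ holds for all $C_1, C_2$ in that class. *)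

theory Defs
  imports "Jordan_Normal_Form.Gauss_Jordan_Elimination" "HOL-Combinatorics.Permutations"
begin

definition row_mult :: "'a::comm_semiring_0 vec \<Rightarrow> 'a mat \<Rightarrow> 'a vec" where
  "row_mult x A = transpose_mat A *\<^sub>v x"

definition gen_matrix :: "nat \<Rightarrow> nat \<Rightarrow> 'a::field mat \<Rightarrow> 'a vec set \<Rightarrow> bool" where
  "gen_matrix n k G C \<longleftrightarrow> G \<in> carrier_mat k n
     \<and> inj_on (\<lambda>u. row_mult u G) (carrier_vec k)
     \<and> C = (\<lambda>u. row_mult u G) ` carrier_vec k"

definition linear_code :: "nat \<Rightarrow> nat \<Rightarrow> 'a::field vec set \<Rightarrow> bool" where
  "linear_code n k C \<longleftrightarrow> (\<exists>G. gen_matrix n k G C)"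

definition ones_vec :: "nat \<Rightarrow> 'a::one vec" where
  "ones_vec n = vec n (\<lambda>_. 1)"

definition ones_mat :: "nat \<Rightarrow> 'a::one mat" where
  "ones_mat n = mat n n (\<lambda>_. 1)"

definition dual_code :: "nat \<Rightarrow> 'a::field vec set \<Rightarrow> 'a vec set" where
  "dual_code n C = {y \<in> carrier_vec n. \<forall>x\<in>C. x \<bullet> y = 0}"

definition code_hull :: "nat \<Rightarrow> 'a::field vec set \<Rightarrow> 'a vec set" where
  "code_hull n C = C \<inter> dual_code n C"

definition LCD :: "nat \<Rightarrow> 'a::field vec set \<Rightarrow> bool" where
  "LCD n C \<longleftrightarrow> code_hull n C = {0\<^sub>v n}"

(* C is M-LCD: G M G^T is nonsingular for a generator matrix G of C
  (this does not depend on the choice of G). *)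
definition M_LCD :: "nat \<Rightarrow> 'a::field mat \<Rightarrow> 'a vec set \<Rightarrow> bool" where
  "M_LCD n M C \<longleftrightarrow> (\<exists>k G. gen_matrix n k G C \<and> invertible_mat (G * M * transpose_mat G))"

definition proj :: "nat \<Rightarrow> 'a::field mat \<Rightarrow> 'a vec set \<Rightarrow> 'a mat" where
  "proj n M C = (let G = (SOME G. \<exists>k. gen_matrix n k G C) in
      M * transpose_mat G * the (mat_inverse (G * M * transpose_mat G)) * G)"

definition perm_mat :: "nat \<Rightarrow> (nat \<Rightarrow> nat) \<Rightarrow> 'a::{zero,one} mat" where
  "perm_mat n p = mat n n (\<lambda>(i,j). if p i = j then 1 else 0)"

definition is_perm_mat :: "nat \<Rightarrow> 'a::{zero,one} mat \<Rightarrow> bool" where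
  "is_perm_mat n P \<longleftrightarrow> (\<exists>p. p permutes {..<n} \<and> P = perm_mat n p)"

definition code_perm :: "'a::field vec set \<Rightarrow> 'a mat \<Rightarrow> 'a vec set" where
  "code_perm C P = (\<lambda>x. row_mult x P) ` C"

definition perm_equiv :: "nat \<Rightarrow> 'a::field vec set \<Rightarrow> 'a vec set \<Rightarrow> bool" where
  "perm_equiv n C1 C2 \<longleftrightarrow> (\<exists>P. is_perm_mat n P \<and> C2 = code_perm C1 P)"

definition perm_class :: "nat \<Rightarrow> 'a::field vec set \<Rightarrow> 'a vec set set" where
  "perm_class n C = {code_perm C P | P. is_perm_mat n P}"

definition proj_equiv :: "nat \<Rightarrow> 'a::field mat \<Rightarrow> 'a mat \<Rightarrow> bool" where
  "proj_equiv n A B \<longleftrightarrow> (\<exists>P. is_perm_mat n P \<and> B = transpose_mat P * A * P)"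

definition GI_reducible :: "nat \<Rightarrow> 'a::field vec set \<Rightarrow> bool" where
  "GI_reducible n C \<longleftrightarrow> (\<exists>a b::'a. a \<noteq> 0 \<and> a + of_nat n * b \<noteq> 0 \<and>
     (let M = a \<cdot>\<^sub>m 1\<^sub>m n + b \<cdot>\<^sub>m ones_mat n in
       (\<forall>C'\<in>perm_class n C. M_LCD n M C') \<and>
       (\<forall>C1\<in>perm_class n C. \<forall>C2\<in>perm_class n C.
          perm_equiv n C1 C2 \<longleftrightarrow> proj_equiv n (proj n M C1) (proj n M C2))))"

end

theory Submission
  imports Defs "Jordan_Normal_Form.Determinant"
begin

lemma row_mult_carrier[simp]:
  "A \<in> carrier_mat k n \<Longrightarrow> u \<in> carrier_vec k \<Longrightarrow> row_mult u A \<in> carrier_vec n"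
  unfolding row_mult_def by auto

lemma row_mult_mult:
  fixes A :: "'a::comm_semiring_0 mat"
  assumes "A \<in> carrier_mat a b" "B \<in> carrier_mat b c" "x \<in> carrier_vec a"
  shows "row_mult x (A * B) = row_mult (row_mult x A) B"
  unfolding row_mult_def using assms
  by (simp add: transpose_mult[OF assms(1,2)])

lemma gen_sub: "gen_matrix n k G C \<Longrightarrow> C \<subseteq> carrier_vec n"
  unfolding gen_matrix_def by auto

lemma gen_minus:
  assumes g: "gen_matrix n k G C" and x: "x \<in> C" and y: "y \<in> C"
  shows "x - y \<in> C"
proof -
  from g have G: "G \<in> carrier_mat k n" and C: "C = (\<lambda>u. row_mult u G) ` carrier_vec k"
    unfolding gen_matrix_def by auto
  from x y C obtain u v where u: "u \<in> carrier_vec k" "x = row_mult u G"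
    and v: "v \<in> carrier_vec k" "y = row_mult v G" by auto
  have "row_mult (u - v) G = x - y" unfolding u v row_mult_def
    using G u v by (simp add: mult_minus_distrib_mat_vec)
  moreover have "u - v \<in> carrier_vec k" using u v by auto
  ultimately show ?thesis using C image_eqI by metis
qed

lemma gen_smult:
  assumes g: "gen_matrix n k G C" and x: "x \<in> C"
  shows "t \<cdot>\<^sub>v x \<in> C"
proof -
  from g have G: "G \<in> carrier_mat k n" and C: "C = (\<lambda>u. row_mult u G) ` carrier_vec k"
    unfolding gen_matrix_def by auto
  from x C obtain u where u: "u \<in> carrier_vec k" "x = row_mult u G" by auto
  have "row_mult (t \<cdot>\<^sub>v u) G = t \<cdot>\<^sub>v x" unfolding u row_mult_def
    using G u by (simp add: mult_mat_vec)
  moreover have "t \<cdot>\<^sub>v u \<in> carrier_vec k" using u by auto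
  ultimately show ?thesis using C image_eqI by metis
qed

lemma gen_zero:
  assumes g: "gen_matrix n k G C"
  shows "0\<^sub>v n \<in> C"
proof -
  from g have G: "G \<in> carrier_mat k n" and C: "C = (\<lambda>u. row_mult u G) ` carrier_vec k"
    unfolding gen_matrix_def by auto
  have "row_mult (0\<^sub>v k) G = 0\<^sub>v n" unfolding row_mult_def using G by auto
  thus ?thesis using C image_eqI zero_carrier_vec by metis
qed

lemma gen_mult_zero:
  assumes g: "gen_matrix n k G C" and z: "z \<in> carrier_vec n"
  shows "(G *\<^sub>v z = 0\<^sub>v k) \<longleftrightarrow> (\<forall>x\<in>C. x \<bullet> z = 0)"
proof -
  from g have G: "G \<in> carrier_mat k n" and C: "C = (\<lambda>u. row_mult u G) ` carrier_vec k"
    unfolding gen_matrix_def by auto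
  have key: "row_mult u G \<bullet> z = u \<bullet> (G *\<^sub>v z)" if "u \<in> carrier_vec k" for u
    unfolding row_mult_def by (rule transpose_vec_mult_scalar[OF G z that])
  show ?thesis
  proof
    assume "G *\<^sub>v z = 0\<^sub>v k"
    thus "\<forall>x\<in>C. x \<bullet> z = 0" using C key by auto
  next
    assume h: "\<forall>x\<in>C. x \<bullet> z = 0"
    show "G *\<^sub>v z = 0\<^sub>v k"
    proof (rule eq_vecI)
      fix i assume "i < dim_vec (0\<^sub>v k)"
      hence i: "i < k" by auto
      have "row_mult (unit_vec k i) G \<in> C" using C by auto
      hence "0 = unit_vec k i \<bullet> (G *\<^sub>v z)" using h key[of "unit_vec k i"] by auto
      also have "\<dots> = (G *\<^sub>v z) $ i" using i G z by (simp add: scalar_prod_left_unit)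
      finally show "(G *\<^sub>v z) $ i = 0\<^sub>v k $ i" using i by simp
    qed (use G in auto)
  qed
qed

lemma invertible_kernel:
  fixes K :: "'a::field mat"
  assumes K: "K \<in> carrier_mat k k"
  shows "invertible_mat K \<longleftrightarrow> (\<forall>u\<in>carrier_vec k. K *\<^sub>v u = 0\<^sub>v k \<longrightarrow> u = 0\<^sub>v k)"
proof
  assume "invertible_mat K"
  then obtain B where KB: "K * B = 1\<^sub>m k" and BK: "B * K = 1\<^sub>m (dim_row B)"
    unfolding invertible_mat_def inverts_mat_def using K by auto
  have "dim_row B = k" using BK K by (metis dim_col_mat(1) index_mult_mat(3) index_one_mat(3) carrier_matD(2))
  moreover have "dim_col B = k" using KB by (metis index_mult_mat(3) index_one_mat(3))
  ultimately have B: "B \<in> carrier_mat k k" by auto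
  show "\<forall>u\<in>carrier_vec k. K *\<^sub>v u = 0\<^sub>v k \<longrightarrow> u = 0\<^sub>v k"
  proof (intro ballI impI)
    fix u assume u: "u \<in> carrier_vec k" and "K *\<^sub>v u = 0\<^sub>v k"
    have "u = (B * K) *\<^sub>v u" using BK \<open>dim_row B = k\<close> u by simp
    also have "\<dots> = B *\<^sub>v (K *\<^sub>v u)" using B K u by simp
    also have "\<dots> = 0\<^sub>v k" using \<open>K *\<^sub>v u = 0\<^sub>v k\<close> B by (intro eq_vecI) (auto simp: mult_mat_vec_def)
    finally show "u = 0\<^sub>v k" .
  qed
next
  assume h: "\<forall>u\<in>carrier_vec k. K *\<^sub>v u = 0\<^sub>v k \<longrightarrow> u = 0\<^sub>v k"
  have "det K \<noteq> 0" using h det_0_iff_vec_prod_zero[OF K] by auto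
  from det_non_zero_imp_unit[OF K this, of "()"]
  obtain B where "B \<in> carrier_mat k k" "K * B = 1\<^sub>m k" "B * K = 1\<^sub>m k"
    unfolding Units_def ring_mat_simps by auto
  thus "invertible_mat K" unfolding invertible_mat_def inverts_mat_def square_mat.simps
    using K by auto
qed

lemma invertible_mat_inverse:
  fixes K :: "'a::field mat"
  assumes K: "K \<in> carrier_mat k k" and inv: "invertible_mat K"
  shows "\<exists>B. mat_inverse K = Some B \<and> K * B = 1\<^sub>m k \<and> B * K = 1\<^sub>m k \<and> B \<in> carrier_mat k k"
proof -
  obtain B where KB: "K * B = 1\<^sub>m k" and BK: "B * K = 1\<^sub>m (dim_row B)"
    using inv unfolding invertible_mat_def inverts_mat_def using K by auto
  have "dim_row B = k" using BK K by (metis dim_col_mat(1) index_mult_mat(3) index_one_mat(3) carrier_matD(2))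
  moreover have "dim_col B = k" using KB by (metis index_mult_mat(3) index_one_mat(3))
  ultimately have B: "B \<in> carrier_mat k k" by auto
  have "K \<in> Units (ring_mat TYPE('a) k ())"
    unfolding Units_def ring_mat_simps using K B KB BK \<open>dim_row B = k\<close> by auto
  have "mat_inverse K \<noteq> None"
  proof
    assume "mat_inverse K = None"
    from mat_inverse(1)[OF K this, of "()"] show False using \<open>K \<in> Units _\<close> by simp
  qed
  then obtain B' where "mat_inverse K = Some B'" by auto
  thus ?thesis using mat_inverse(2)[OF K] by auto
qed

definition nondeg :: "nat \<Rightarrow> 'a::field mat \<Rightarrow> 'a vec set \<Rightarrow> bool" where
  "nondeg n M C \<longleftrightarrow> (\<forall>y\<in>C. (\<forall>x\<in>C. x \<bullet> (M *\<^sub>v y) = 0) \<longrightarrow> y = 0\<^sub>v n)"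

lemma inv_iff_nondeg:
  fixes G :: "'a::field mat"
  assumes g: "gen_matrix n k G C" and M: "M \<in> carrier_mat n n"
  shows "invertible_mat (G * M * transpose_mat G) \<longleftrightarrow> nondeg n M C"
proof -
  from g have G: "G \<in> carrier_mat k n" and C: "C = (\<lambda>u. row_mult u G) ` carrier_vec k"
    and inj: "inj_on (\<lambda>u. row_mult u G) (carrier_vec k)"
    unfolding gen_matrix_def by auto
  have K: "G * M * transpose_mat G \<in> carrier_mat k k" using G M by auto
  have Ku: "(G * M * transpose_mat G) *\<^sub>v u = G *\<^sub>v (M *\<^sub>v row_mult u G)"
    if u: "u \<in> carrier_vec k" for u
  proof -
    have "(G * M * transpose_mat G) *\<^sub>v u = (G * M) *\<^sub>v (transpose_mat G *\<^sub>v u)"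
      by (rule assoc_mult_mat_vec[of _ k n _ k], insert G M u, auto)
    also have "\<dots> = G *\<^sub>v (M *\<^sub>v (transpose_mat G *\<^sub>v u))"
      by (rule assoc_mult_mat_vec[of _ k n _ n], insert G M u, auto)
    finally show ?thesis unfolding row_mult_def .
  qed
  have z0: "row_mult u G = 0\<^sub>v n \<longleftrightarrow> u = 0\<^sub>v k" if u: "u \<in> carrier_vec k" for u
  proof
    have "row_mult (0\<^sub>v k) G = 0\<^sub>v n" unfolding row_mult_def using G by auto
    moreover assume "row_mult u G = 0\<^sub>v n"
    ultimately show "u = 0\<^sub>v k" using inj u unfolding inj_on_def by auto
  qed (auto simp: row_mult_def intro!: eq_vecI, insert G, auto)
  have eq: "(G * M * transpose_mat G) *\<^sub>v u = 0\<^sub>v k \<longleftrightarrow> (\<forall>x\<in>C. x \<bullet> (M *\<^sub>v row_mult u G) = 0)"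
    if u: "u \<in> carrier_vec k" for u
    unfolding Ku[OF u] using gen_mult_zero[OF g] M G u by auto
  show ?thesis unfolding invertible_kernel[OF K] nondeg_def
    using eq z0 C by auto
qed

definition Mab :: "'a::field \<Rightarrow> 'a \<Rightarrow> nat \<Rightarrow> 'a mat" where
  "Mab a b n = a \<cdot>\<^sub>m 1\<^sub>m n + b \<cdot>\<^sub>m ones_mat n"

lemma Mab_carrier[simp]: "Mab a b n \<in> carrier_mat n n"
  unfolding Mab_def ones_mat_def by auto

lemma Mab_vec:
  assumes y: "y \<in> carrier_vec n"
  shows "Mab a b n *\<^sub>v y = a \<cdot>\<^sub>v y + (b * (ones_vec n \<bullet> y)) \<cdot>\<^sub>v ones_vec n"
proof (rule eq_vecI)
  fix i assume "i < dim_vec (a \<cdot>\<^sub>v y + (b * (ones_vec n \<bullet> y)) \<cdot>\<^sub>v ones_vec n)"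
  hence i: "i < n" using y by (simp add: ones_vec_def)
  have "(Mab a b n *\<^sub>v y) $ i = (\<Sum>j = 0..<n. (a * (if i = j then 1 else 0) + b) * y $ j)"
    using i y unfolding Mab_def ones_mat_def mult_mat_vec_def scalar_prod_def
    by (auto intro!: sum.cong)
  also have "\<dots> = (\<Sum>j = 0..<n. (if i = j then a * y $ j else 0) + b * y $ j)"
    by (rule sum.cong) (auto simp: algebra_simps)
  also have "\<dots> = (\<Sum>j = 0..<n. (if i = j then a * y $ j else 0)) + b * (\<Sum>j = 0..<n. y $ j)"
    by (simp add: sum.distrib sum_distrib_left)
  also have "\<dots> = a * y $ i + b * (\<Sum>j = 0..<n. y $ j)" using i by simp
  also have "\<dots> = (a \<cdot>\<^sub>v y + (b * (ones_vec n \<bullet> y)) \<cdot>\<^sub>v ones_vec n) $ i"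
    using i y by (simp add: ones_vec_def scalar_prod_def)
  finally show "(Mab a b n *\<^sub>v y) $ i = (a \<cdot>\<^sub>v y + (b * (ones_vec n \<bullet> y)) \<cdot>\<^sub>v ones_vec n) $ i" .
qed (use y in \<open>auto simp: Mab_def ones_vec_def ones_mat_def\<close>)

lemma ones_carrier[simp]: "ones_vec n \<in> carrier_vec n"
  unfolding ones_vec_def by auto

lemma Mab_form:
  assumes x: "x \<in> carrier_vec n" and y: "y \<in> carrier_vec n"
  shows "x \<bullet> (Mab a b n *\<^sub>v y) = a * (x \<bullet> y) + b * ((x \<bullet> ones_vec n) * (y \<bullet> ones_vec n))"
proof -
  have "x \<bullet> (Mab a b n *\<^sub>v y) = x \<bullet> (a \<cdot>\<^sub>v y) + x \<bullet> ((b * (ones_vec n \<bullet> y)) \<cdot>\<^sub>v ones_vec n)"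
    unfolding Mab_vec[OF y] by (rule scalar_prod_add_distrib[of _ n], insert x y, auto)
  also have "\<dots> = a * (x \<bullet> y) + b * ((x \<bullet> ones_vec n) * (y \<bullet> ones_vec n))"
    using x y by (simp add: comm_scalar_prod[of "ones_vec n" n y])
  finally show ?thesis .
qed

lemma Mab_sym:
  assumes x: "x \<in> carrier_vec n" and y: "y \<in> carrier_vec n"
  shows "x \<bullet> (Mab a b n *\<^sub>v y) = y \<bullet> (Mab a b n *\<^sub>v x)"
  unfolding Mab_form[OF x y] Mab_form[OF y x] using comm_scalar_prod[OF x y] by simp

abbreviation iv :: "(nat \<Rightarrow> nat) \<Rightarrow> nat \<Rightarrow> nat" where "iv p \<equiv> Hilbert_Choice.inv p"

definition sig :: "(nat \<Rightarrow> nat) \<Rightarrow> nat \<Rightarrow> 'a vec \<Rightarrow> 'a vec" where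
  "sig p n x = vec n (\<lambda>j. x $ iv p j)"

lemma sig_carrier[simp]: "sig p n x \<in> carrier_vec n"
  unfolding sig_def by auto

lemma inv_lt: "p permutes {..<n} \<Longrightarrow> j < n \<Longrightarrow> iv p j < n"
  using permutes_inv permutes_in_image by fastforce

lemma perm_row_mult:
  fixes x :: "'a::field vec"
  assumes p: "p permutes {..<n}" and x: "x \<in> carrier_vec n"
  shows "row_mult x (perm_mat n p) = sig p n x"
proof (rule eq_vecI)
  fix j assume "j < dim_vec (sig p n x)"
  hence j: "j < n" by (simp add: sig_def)
  have "row_mult x (perm_mat n p) $ j = (\<Sum>i = 0..<n. (if iv p j = i then x $ i else 0))"
    using j x unfolding row_mult_def perm_mat_def mult_mat_vec_def scalar_prod_def
    by (auto intro!: sum.cong simp: permutes_inv_eq[OF p])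
  also have "\<dots> = x $ iv p j" using inv_lt[OF p j] by simp
  finally show "row_mult x (perm_mat n p) $ j = sig p n x $ j" using j by (simp add: sig_def)
qed (auto simp: row_mult_def perm_mat_def sig_def)

lemma sig_dot:
  assumes p: "p permutes {..<n}" and x: "x \<in> carrier_vec n" and y: "y \<in> carrier_vec n"
  shows "sig p n x \<bullet> sig p n y = x \<bullet> y"
proof -
  have ip: "iv p permutes {0..<n}" using permutes_inv[OF p] by (simp add: atLeast0LessThan)
  have "sig p n x \<bullet> sig p n y = (\<Sum>i = 0..<n. x $ iv p i * y $ iv p i)"
    unfolding sig_def scalar_prod_def by simp
  also have "\<dots> = (\<Sum>i = 0..<n. x $ i * y $ i)"
    using sum.permute[OF ip, of "\<lambda>i. x $ i * y $ i"] by (simp add: comp_def)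
  also have "\<dots> = x \<bullet> y" unfolding scalar_prod_def using y by simp
  finally show ?thesis .
qed

lemma sig_ones: "p permutes {..<n} \<Longrightarrow> sig p n (ones_vec n) = ones_vec n"
  unfolding sig_def ones_vec_def using inv_lt by (auto intro!: eq_vecI)

lemma sig_Mab:
  assumes p: "p permutes {..<n}" and x: "x \<in> carrier_vec n" and y: "y \<in> carrier_vec n"
  shows "sig p n x \<bullet> (Mab a b n *\<^sub>v sig p n y) = x \<bullet> (Mab a b n *\<^sub>v y)"
proof -
  have "sig p n x \<bullet> ones_vec n = x \<bullet> ones_vec n"
    using sig_dot[OF p x ones_carrier, unfolded sig_ones[OF p]] .
  moreover have "sig p n y \<bullet> ones_vec n = y \<bullet> ones_vec n"
    using sig_dot[OF p y ones_carrier, unfolded sig_ones[OF p]] .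
  ultimately show ?thesis unfolding Mab_form[OF sig_carrier sig_carrier] Mab_form[OF x y]
    using sig_dot[OF p x y] by simp
qed

lemma sig_minus:
  assumes x: "x \<in> carrier_vec n" and y: "y \<in> carrier_vec n" and p: "p permutes {..<n}"
  shows "sig p n (x - y) = sig p n x - sig p n y"
  unfolding sig_def using x y inv_lt[OF p] by (auto intro!: eq_vecI)

lemma sig_inv1:
  assumes p: "p permutes {..<n}" and x: "x \<in> carrier_vec n"
  shows "sig (iv p) n (sig p n x) = x"
  unfolding sig_def using x inv_lt[OF p] permutes_inv[OF p] p permutes_in_image[OF p]
  by (auto intro!: eq_vecI simp: inv_inv_eq permutes_bij permutes_inverses)

lemma sig_inv2:
  assumes p: "p permutes {..<n}" and x: "x \<in> carrier_vec n"
  shows "sig p n (sig (iv p) n x) = x"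
  using sig_inv1[OF permutes_inv[OF p] x] p by (simp add: inv_inv_eq permutes_bij)

lemma sig_zero: "p permutes {..<n} \<Longrightarrow> sig p n (0\<^sub>v n) = 0\<^sub>v n"
  unfolding sig_def using inv_lt by (auto intro!: eq_vecI)

lemma sig_inj:
  assumes p: "p permutes {..<n}"
  shows "inj_on (sig p n) (carrier_vec n)"
  by (rule inj_onI, metis sig_inv1[OF p])

lemma perm_mat_carrier[simp]: "perm_mat n p \<in> carrier_mat n n"
  unfolding perm_mat_def by auto

lemma transpose_perm:
  assumes p: "p permutes {..<n}"
  shows "transpose_mat (perm_mat n p :: 'a::field mat) = perm_mat n (iv p)"
  unfolding perm_mat_def using permutes_inv_eq[OF p] by (auto intro!: eq_matI)

lemma code_perm_sig:
  assumes p: "p permutes {..<n}" and C: "C \<subseteq> carrier_vec n"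
  shows "code_perm C (perm_mat n p) = sig p n ` C"
  unfolding code_perm_def using perm_row_mult[OF p] C by (auto intro!: image_cong)

lemma gen_perm:
  assumes g: "gen_matrix n k G C" and p: "p permutes {..<n}"
  shows "gen_matrix n k (G * perm_mat n p) (sig p n ` C)"
proof -
  from g have G: "G \<in> carrier_mat k n" and C: "C = (\<lambda>u. row_mult u G) ` carrier_vec k"
    and inj: "inj_on (\<lambda>u. row_mult u G) (carrier_vec k)"
    unfolding gen_matrix_def by auto
  have e: "row_mult u (G * perm_mat n p) = sig p n (row_mult u G)" if u: "u \<in> carrier_vec k" for u
    using row_mult_mult[OF G perm_mat_carrier u] perm_row_mult[OF p row_mult_carrier[OF G u]] by simp
  have "inj_on (\<lambda>u. sig p n (row_mult u G)) (carrier_vec k)"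
    using inj sig_inj[OF p] G unfolding inj_on_def by (meson row_mult_carrier)
  hence "inj_on (\<lambda>u. row_mult u (G * perm_mat n p)) (carrier_vec k)"
    using e by (simp add: inj_on_def)
  moreover have "(\<lambda>u. row_mult u (G * perm_mat n p)) ` carrier_vec k = sig p n ` C"
    unfolding C image_image using e by auto
  ultimately show ?thesis unfolding gen_matrix_def using G by auto
qed

lemma vec_minus_eq0:
  fixes a :: "'a::ab_group_add vec"
  assumes "a \<in> carrier_vec n" "b \<in> carrier_vec n" "a - b = 0\<^sub>v n"
  shows "a = b"
proof (rule eq_vecI)
  fix i assume "i < dim_vec b"
  hence "i < n" using assms by auto
  hence "(a - b) $ i = 0" using assms(3) by simp
  moreover have "(a - b) $ i = a $ i - b $ i" using \<open>i < n\<close> assms(1,2) by simp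
  ultimately show "a $ i = b $ i" by simp
qed (use assms in auto)

definition isproj :: "nat \<Rightarrow> 'a::field mat \<Rightarrow> 'a vec set \<Rightarrow> 'a mat \<Rightarrow> bool" where
  "isproj n M C Q \<longleftrightarrow> Q \<in> carrier_mat n n \<and>
     (\<forall>x\<in>carrier_vec n. row_mult x Q \<in> C \<and> (\<forall>y\<in>C. (x - row_mult x Q) \<bullet> (M *\<^sub>v y) = 0))"

lemma proj_isproj:
  fixes M :: "'a::field mat"
  assumes g0: "gen_matrix n k0 G0 C" and M: "M \<in> carrier_mat n n" and nd: "nondeg n M C"
  shows "isproj n M C (proj n M C)"
proof -
  define G where "G = (SOME G. \<exists>k. gen_matrix n k G C)"
  have "\<exists>k. gen_matrix n k G C" unfolding G_def by (rule someI_ex, use g0 in blast)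
  then obtain k where g: "gen_matrix n k G C" by auto
  from g have G: "G \<in> carrier_mat k n" and C: "C = (\<lambda>u. row_mult u G) ` carrier_vec k"
    unfolding gen_matrix_def by auto
  have K: "G * M * transpose_mat G \<in> carrier_mat k k" using G M by auto
  have "invertible_mat (G * M * transpose_mat G)" using inv_iff_nondeg[OF g M] nd by simp
  from invertible_mat_inverse[OF K this] obtain B where
    mi: "mat_inverse (G * M * transpose_mat G) = Some B" and
    BK: "B * (G * M * transpose_mat G) = 1\<^sub>m k" and B: "B \<in> carrier_mat k k" by auto
  have P: "proj n M C = M * transpose_mat G * B * G"
    unfolding proj_def G_def[symmetric] Let_def mi by simp
  have Pc: "M * transpose_mat G * B * G \<in> carrier_mat n n" using M G B by auto
  have Ku: "(G * M * transpose_mat G) *\<^sub>v u = G *\<^sub>v (M *\<^sub>v (transpose_mat G *\<^sub>v u))"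
    if u: "u \<in> carrier_vec k" for u
  proof -
    have "(G * M * transpose_mat G) *\<^sub>v u = (G * M) *\<^sub>v (transpose_mat G *\<^sub>v u)"
      by (rule assoc_mult_mat_vec[of _ k n _ k], insert G M u, auto)
    also have "\<dots> = G *\<^sub>v (M *\<^sub>v (transpose_mat G *\<^sub>v u))"
      by (rule assoc_mult_mat_vec[of _ k n _ n], insert G M u, auto)
    finally show ?thesis .
  qed
  have Pw: "(M * transpose_mat G * B * G) *\<^sub>v w = M *\<^sub>v (transpose_mat G *\<^sub>v (B *\<^sub>v (G *\<^sub>v w)))"
    if w: "w \<in> carrier_vec n" for w
  proof -
    have "(M * transpose_mat G * B * G) *\<^sub>v w = (M * transpose_mat G * B) *\<^sub>v (G *\<^sub>v w)"
      by (rule assoc_mult_mat_vec[of _ n k _ n], insert G M B w, auto)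
    also have "\<dots> = (M * transpose_mat G) *\<^sub>v (B *\<^sub>v (G *\<^sub>v w))"
      by (rule assoc_mult_mat_vec[of _ n k _ k], insert G M B w, auto)
    also have "\<dots> = M *\<^sub>v (transpose_mat G *\<^sub>v (B *\<^sub>v (G *\<^sub>v w)))"
      by (rule assoc_mult_mat_vec[of _ n n _ k], insert G M B w, auto)
    finally show ?thesis .
  qed
  have fix_w: "(M * transpose_mat G * B * G) *\<^sub>v (M *\<^sub>v (transpose_mat G *\<^sub>v v)) = M *\<^sub>v (transpose_mat G *\<^sub>v v)"
    if v: "v \<in> carrier_vec k" for v
  proof -
    have w: "M *\<^sub>v (transpose_mat G *\<^sub>v v) \<in> carrier_vec n" using M G v by auto
    have "B *\<^sub>v (G *\<^sub>v (M *\<^sub>v (transpose_mat G *\<^sub>v v))) = B *\<^sub>v ((G * M * transpose_mat G) *\<^sub>v v)"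
      using Ku[OF v] by simp
    also have "\<dots> = (B * (G * M * transpose_mat G)) *\<^sub>v v"
      by (rule assoc_mult_mat_vec[symmetric, of _ k k _ k], insert B K v, auto)
    also have "\<dots> = v" using BK v by simp
    finally show ?thesis unfolding Pw[OF w] by simp
  qed
  show ?thesis unfolding isproj_def P
  proof (intro conjI ballI Pc)
    fix x :: "'a vec" assume x: "x \<in> carrier_vec n"
    have "row_mult x (M * transpose_mat G * B * G) = row_mult (row_mult x (M * transpose_mat G * B)) G"
      by (rule row_mult_mult[of _ n k], insert M G B x, auto)
    moreover have "row_mult x (M * transpose_mat G * B) \<in> carrier_vec k"
      by (rule row_mult_carrier[of _ n], insert M G B x, auto)
    ultimately show "row_mult x (M * transpose_mat G * B * G) \<in> C" using C by auto
    fix y assume "y \<in> C"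
    then obtain v where v: "v \<in> carrier_vec k" and y: "y = transpose_mat G *\<^sub>v v"
      using C unfolding row_mult_def by auto
    have w: "M *\<^sub>v y \<in> carrier_vec n" using M G v y by auto
    have "(x - row_mult x (M * transpose_mat G * B * G)) \<bullet> (M *\<^sub>v y)
        = x \<bullet> (M *\<^sub>v y) - row_mult x (M * transpose_mat G * B * G) \<bullet> (M *\<^sub>v y)"
      by (rule minus_scalar_prod_distrib[of _ n], insert x w Pc, auto)
    also have "row_mult x (M * transpose_mat G * B * G) \<bullet> (M *\<^sub>v y)
        = x \<bullet> ((M * transpose_mat G * B * G) *\<^sub>v (M *\<^sub>v y))"
      unfolding row_mult_def by (rule transpose_vec_mult_scalar[OF Pc w x])
    also have "\<dots> = x \<bullet> (M *\<^sub>v y)" unfolding y using fix_w[OF v] by simp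
    finally show "(x - row_mult x (M * transpose_mat G * B * G)) \<bullet> (M *\<^sub>v y) = 0" by simp
  qed
qed

lemma isproj_fix:
  fixes M :: "'a::field mat"
  assumes g: "gen_matrix n k G C" and nd: "nondeg n M C" and M: "M \<in> carrier_mat n n"
    and sym: "\<And>x y. x \<in> carrier_vec n \<Longrightarrow> y \<in> carrier_vec n \<Longrightarrow> x \<bullet> (M *\<^sub>v y) = y \<bullet> (M *\<^sub>v x)"
    and d: "d \<in> C" and h: "\<And>y. y \<in> C \<Longrightarrow> d \<bullet> (M *\<^sub>v y) = 0"
  shows "d = 0\<^sub>v n"
proof -
  have Cc: "C \<subseteq> carrier_vec n" using gen_sub[OF g] .
  have "\<forall>x\<in>C. x \<bullet> (M *\<^sub>v d) = 0"
  proof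
    fix x assume x: "x \<in> C"
    have "x \<bullet> (M *\<^sub>v d) = d \<bullet> (M *\<^sub>v x)" using sym Cc x d by auto
    also have "\<dots> = 0" using h x by auto
    finally show "x \<bullet> (M *\<^sub>v d) = 0" .
  qed
  thus ?thesis using nd d unfolding nondeg_def by auto
qed

lemma isproj_unique:
  fixes M :: "'a::field mat"
  assumes g: "gen_matrix n k G C" and nd: "nondeg n M C" and M: "M \<in> carrier_mat n n"
    and sym: "\<And>x y. x \<in> carrier_vec n \<Longrightarrow> y \<in> carrier_vec n \<Longrightarrow> x \<bullet> (M *\<^sub>v y) = y \<bullet> (M *\<^sub>v x)"
    and Q1: "isproj n M C Q1" and Q2: "isproj n M C Q2"
  shows "Q1 = Q2"
proof -
  have Cc: "C \<subseteq> carrier_vec n" using gen_sub[OF g] .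
  have Q1c: "Q1 \<in> carrier_mat n n" and Q2c: "Q2 \<in> carrier_mat n n"
    using Q1 Q2 unfolding isproj_def by auto
  have eqx: "row_mult x Q1 = row_mult x Q2" if x: "x \<in> carrier_vec n" for x
  proof -
    let ?a = "row_mult x Q1" and ?b = "row_mult x Q2"
    have a: "?a \<in> C" and b: "?b \<in> C" using Q1 Q2 x unfolding isproj_def by auto
    have ac: "?a \<in> carrier_vec n" and bc: "?b \<in> carrier_vec n" using Q1c Q2c x by auto
    have "?a - ?b = 0\<^sub>v n"
    proof (rule isproj_fix[OF g nd M sym])
      show "?a - ?b \<in> C" by (rule gen_minus[OF g a b])
      fix y assume y: "y \<in> C"
      have w: "M *\<^sub>v y \<in> carrier_vec n" using M y Cc by auto
      have "(x - ?a) \<bullet> (M *\<^sub>v y) = 0" "(x - ?b) \<bullet> (M *\<^sub>v y) = 0"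
        using Q1 Q2 x y unfolding isproj_def by auto
      hence "x \<bullet> (M *\<^sub>v y) - ?a \<bullet> (M *\<^sub>v y) = 0" "x \<bullet> (M *\<^sub>v y) - ?b \<bullet> (M *\<^sub>v y) = 0"
        using minus_scalar_prod_distrib[OF x ac w] minus_scalar_prod_distrib[OF x bc w] by auto
      thus "(?a - ?b) \<bullet> (M *\<^sub>v y) = 0"
        using minus_scalar_prod_distrib[OF ac bc w] by simp
    qed auto
    thus ?thesis using vec_minus_eq0 ac bc by blast
  qed
  show ?thesis
  proof (rule eq_matI)
    fix i j assume i: "i < dim_row Q2" and j: "j < dim_col Q2"
    hence i': "i < n" and j': "j < n" using Q2c by auto
    have e: "row_mult (unit_vec n i) Q $ j = Q $$ (i, j)" if Q: "Q \<in> carrier_mat n n" for Q :: "'a mat"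
      unfolding row_mult_def using Q i' j' by (simp add: scalar_prod_right_unit)
    show "Q1 $$ (i, j) = Q2 $$ (i, j)"
      using e[OF Q1c] e[OF Q2c] eqx[of "unit_vec n i"] by simp
  qed (use Q1c Q2c in auto)
qed

lemma isproj_range:
  fixes M :: "'a::field mat"
  assumes g: "gen_matrix n k G C" and nd: "nondeg n M C" and M: "M \<in> carrier_mat n n"
    and sym: "\<And>x y. x \<in> carrier_vec n \<Longrightarrow> y \<in> carrier_vec n \<Longrightarrow> x \<bullet> (M *\<^sub>v y) = y \<bullet> (M *\<^sub>v x)"
    and Q: "isproj n M C Q"
  shows "(\<lambda>x. row_mult x Q) ` carrier_vec n = C"
proof
  show "(\<lambda>x. row_mult x Q) ` carrier_vec n \<subseteq> C" using Q unfolding isproj_def by auto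
  show "C \<subseteq> (\<lambda>x. row_mult x Q) ` carrier_vec n"
  proof
    fix x assume xC: "x \<in> C"
    have Cc: "C \<subseteq> carrier_vec n" using gen_sub[OF g] .
    have x: "x \<in> carrier_vec n" using xC Cc by auto
    have a: "row_mult x Q \<in> C" using Q x unfolding isproj_def by auto
    have ac: "row_mult x Q \<in> carrier_vec n" using a Cc by auto
    have "x - row_mult x Q = 0\<^sub>v n"
    proof (rule isproj_fix[OF g nd M sym])
      show "x - row_mult x Q \<in> C" by (rule gen_minus[OF g xC a])
      show "(x - row_mult x Q) \<bullet> (M *\<^sub>v y) = 0" if "y \<in> C" for y
        using Q x that unfolding isproj_def by auto
    qed auto
    hence "x = row_mult x Q" using vec_minus_eq0 x ac by blast
    thus "x \<in> (\<lambda>x. row_mult x Q) ` carrier_vec n" using x by blast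
  qed
qed

lemma isproj_perm:
  fixes Q :: "'a::field mat"
  assumes p: "p permutes {..<n}" and Cc: "C \<subseteq> carrier_vec n"
    and Q: "isproj n (Mab a b n) C Q"
  shows "isproj n (Mab a b n) (sig p n ` C) (transpose_mat (perm_mat n p) * Q * perm_mat n p)"
proof -
  let ?P = "perm_mat n p :: 'a mat"
  have ip: "iv p permutes {..<n}" using permutes_inv[OF p] .
  have Qc: "Q \<in> carrier_mat n n" using Q unfolding isproj_def by auto
  have rm: "row_mult x (transpose_mat ?P * Q * ?P) = sig p n (row_mult (sig (iv p) n x) Q)"
    if x: "x \<in> carrier_vec n" for x
  proof -
    have "row_mult x (transpose_mat ?P * Q * ?P) = row_mult (row_mult x (transpose_mat ?P * Q)) ?P"
      by (rule row_mult_mult[of _ n n _ n], insert Qc x, auto intro!: mult_carrier_mat)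
    also have "row_mult x (transpose_mat ?P * Q) = row_mult (row_mult x (transpose_mat ?P)) Q"
      by (rule row_mult_mult[of _ n n _ n], insert Qc x, auto)
    also have "row_mult x (transpose_mat ?P) = sig (iv p) n x"
      unfolding transpose_perm[OF p] by (rule perm_row_mult[OF ip x])
    also have "row_mult (row_mult (sig (iv p) n x) Q) ?P = sig p n (row_mult (sig (iv p) n x) Q)"
      by (rule perm_row_mult[OF p], insert Qc, auto)
    finally show ?thesis .
  qed
  show ?thesis unfolding isproj_def
  proof (intro conjI ballI)
    show "transpose_mat ?P * Q * ?P \<in> carrier_mat n n"
      by (intro mult_carrier_mat[of _ n n] ) (auto simp: Qc)
    fix x :: "'a vec" assume x: "x \<in> carrier_vec n"
    let ?x' = "sig (iv p) n x"
    have x': "?x' \<in> carrier_vec n" by simp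
    have a: "row_mult ?x' Q \<in> C" using Q x' unfolding isproj_def by auto
    thus "row_mult x (transpose_mat ?P * Q * ?P) \<in> sig p n ` C" unfolding rm[OF x] by auto
    fix y assume "y \<in> sig p n ` C"
    then obtain y0 where y0: "y0 \<in> C" and y: "y = sig p n y0" by auto
    have y0c: "y0 \<in> carrier_vec n" using y0 Cc by auto
    have ac: "row_mult ?x' Q \<in> carrier_vec n" using Qc by auto
    have xx: "x = sig p n ?x'" using sig_inv2[OF p x] by simp
    have "x - row_mult x (transpose_mat ?P * Q * ?P) = sig p n (?x' - row_mult ?x' Q)"
      unfolding rm[OF x] by (subst xx, subst sig_minus[OF x' ac p], simp)
    hence "(x - row_mult x (transpose_mat ?P * Q * ?P)) \<bullet> (Mab a b n *\<^sub>v y)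
        = (?x' - row_mult ?x' Q) \<bullet> (Mab a b n *\<^sub>v y0)"
      unfolding y using sig_Mab[OF p _ y0c] x' ac by auto
    also have "\<dots> = 0" using Q x' y0 unfolding isproj_def by auto
    finally show "(x - row_mult x (transpose_mat ?P * Q * ?P)) \<bullet> (Mab a b n *\<^sub>v y) = 0" .
  qed
qed

lemma nondeg_perm:
  fixes C :: "'a::field vec set"
  assumes p: "p permutes {..<n}" and Cc: "C \<subseteq> carrier_vec n" and nd: "nondeg n (Mab a b n) C"
  shows "nondeg n (Mab a b n) (sig p n ` C)"
  unfolding nondeg_def
proof (intro ballI impI)
  fix y' assume "y' \<in> sig p n ` C"
  then obtain y where y: "y \<in> C" and y': "y' = sig p n y" by auto
  assume h: "\<forall>x\<in>sig p n ` C. x \<bullet> (Mab a b n *\<^sub>v y') = 0"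
  have "\<forall>x\<in>C. x \<bullet> (Mab a b n *\<^sub>v y) = 0"
  proof
    fix x assume x: "x \<in> C"
    have xc: "x \<in> carrier_vec n" and yc: "y \<in> carrier_vec n" using x y Cc by auto
    have "x \<bullet> (Mab a b n *\<^sub>v y) = sig p n x \<bullet> (Mab a b n *\<^sub>v sig p n y)"
      by (simp add: sig_Mab[OF p xc yc])
    also have "\<dots> = 0" using h x y' by auto
    finally show "x \<bullet> (Mab a b n *\<^sub>v y) = 0" .
  qed
  hence "y = 0\<^sub>v n" using nd y unfolding nondeg_def by auto
  thus "y' = 0\<^sub>v n" using y' sig_zero[OF p] by simp
qed

lemma is_perm_mat_transpose:
  "is_perm_mat n P \<Longrightarrow> is_perm_mat n (transpose_mat (P :: 'a::field mat))"
  unfolding is_perm_mat_def using transpose_perm permutes_inv by metis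

lemma equiv_iff:
  fixes C1 :: "'a::field vec set"
  assumes g1: "gen_matrix n k1 G1 C1" and g2: "gen_matrix n k2 G2 C2"
    and nd1: "nondeg n (Mab a b n) C1" and nd2: "nondeg n (Mab a b n) C2"
  shows "perm_equiv n C1 C2 \<longleftrightarrow> proj_equiv n (proj n (Mab a b n) C1) (proj n (Mab a b n) C2)"
proof -
  let ?M = "Mab a b n"
  have sym: "\<And>x y. x \<in> carrier_vec n \<Longrightarrow> y \<in> carrier_vec n \<Longrightarrow> x \<bullet> (?M *\<^sub>v y) = y \<bullet> (?M *\<^sub>v x)"
    by (rule Mab_sym)
  have C1c: "C1 \<subseteq> carrier_vec n" using gen_sub[OF g1] .
  have pr1: "isproj n ?M C1 (proj n ?M C1)" by (rule proj_isproj[OF g1 Mab_carrier nd1])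
  have pr2: "isproj n ?M C2 (proj n ?M C2)" by (rule proj_isproj[OF g2 Mab_carrier nd2])
  show ?thesis
  proof
    assume "perm_equiv n C1 C2"
    then obtain p where p: "p permutes {..<n}" and C2: "C2 = code_perm C1 (perm_mat n p)"
      unfolding perm_equiv_def is_perm_mat_def by auto
    have C2': "C2 = sig p n ` C1" using C2 code_perm_sig[OF p C1c] by simp
    have "isproj n ?M C2 (transpose_mat (perm_mat n p) * proj n ?M C1 * perm_mat n p)"
      unfolding C2' by (rule isproj_perm[OF p C1c pr1])
    hence "proj n ?M C2 = transpose_mat (perm_mat n p) * proj n ?M C1 * perm_mat n p"
      using isproj_unique[OF g2 nd2 Mab_carrier sym pr2] by blast
    thus "proj_equiv n (proj n ?M C1) (proj n ?M C2)"
      unfolding proj_equiv_def is_perm_mat_def using p by blast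
  next
    assume "proj_equiv n (proj n ?M C1) (proj n ?M C2)"
    then obtain p where p: "p permutes {..<n}"
      and e: "proj n ?M C2 = transpose_mat (perm_mat n p) * proj n ?M C1 * perm_mat n p"
      unfolding proj_equiv_def is_perm_mat_def by auto
    have "isproj n ?M (sig p n ` C1) (proj n ?M C2)"
      unfolding e by (rule isproj_perm[OF p C1c pr1])
    hence "(\<lambda>x. row_mult x (proj n ?M C2)) ` carrier_vec n = sig p n ` C1"
      using isproj_range[OF gen_perm[OF g1 p] nondeg_perm[OF p C1c nd1] Mab_carrier sym] by blast
    moreover have "(\<lambda>x. row_mult x (proj n ?M C2)) ` carrier_vec n = C2"
      by (rule isproj_range[OF g2 nd2 Mab_carrier sym pr2])
    ultimately have "C2 = code_perm C1 (perm_mat n p)" using code_perm_sig[OF p C1c] by simp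
    thus "perm_equiv n C1 C2" unfolding perm_equiv_def is_perm_mat_def using p by blast
  qed
qed

lemma sig_id: "x \<in> carrier_vec n \<Longrightarrow> sig id n x = x"
  unfolding sig_def by (auto intro!: eq_vecI simp: inv_id)

lemma GI_iff:
  fixes C :: "'a::field vec set"
  assumes lc: "linear_code n k C"
  shows "GI_reducible n C \<longleftrightarrow> (\<exists>a b. a \<noteq> 0 \<and> a + of_nat n * b \<noteq> 0 \<and> nondeg n (Mab a b n) C)"
proof -
  obtain G where g: "gen_matrix n k G C" using lc unfolding linear_code_def by auto
  have Cc: "C \<subseteq> carrier_vec n" using gen_sub[OF g] .
  have pc: "perm_class n C = {sig p n ` C | p. p permutes {..<n}}"
    unfolding perm_class_def is_perm_mat_def using code_perm_sig Cc by blast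
  have idp: "id permutes {..<n}" by (rule permutes_id)
  have "sig id n ` C = (\<lambda>x. x) ` C" by (rule image_cong, simp, use sig_id Cc in blast)
  hence "C = sig id n ` C" by simp
  hence Cin: "C \<in> perm_class n C" unfolding pc using idp by blast
  have mlcd: "M_LCD n (Mab a b n) C' \<longleftrightarrow> nondeg n (Mab a b n) C'"
    if "gen_matrix n k' G' C'" for a b C' k' G'
    unfolding M_LCD_def using inv_iff_nondeg[OF _ Mab_carrier] that by blast
  have cls: "\<exists>G'. gen_matrix n k G' C'" if "C' \<in> perm_class n C" for C'
    using that gen_perm[OF g] unfolding pc by blast
  show ?thesis
    unfolding GI_reducible_def Let_def Mab_def[symmetric]
  proof
    assume "\<exists>a b. a \<noteq> 0 \<and> a + of_nat n * b \<noteq> 0 \<and>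
      (\<forall>C'\<in>perm_class n C. M_LCD n (Mab a b n) C') \<and>
      (\<forall>C1\<in>perm_class n C. \<forall>C2\<in>perm_class n C.
          perm_equiv n C1 C2 = proj_equiv n (proj n (Mab a b n) C1) (proj n (Mab a b n) C2))"
    then obtain a b where ab: "a \<noteq> 0" "a + of_nat n * b \<noteq> 0"
      and "\<forall>C'\<in>perm_class n C. M_LCD n (Mab a b n) C'" by blast
    hence "nondeg n (Mab a b n) C" using Cin mlcd[OF g] by blast
    thus "\<exists>a b. a \<noteq> 0 \<and> a + of_nat n * b \<noteq> 0 \<and> nondeg n (Mab a b n) C" using ab by blast
  next
    assume "\<exists>a b. a \<noteq> 0 \<and> a + of_nat n * b \<noteq> 0 \<and> nondeg n (Mab a b n) C"
    then obtain a b where ab: "a \<noteq> 0" "a + of_nat n * b \<noteq> 0"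
      and nd: "nondeg n (Mab a b n) C" by blast
    have ndc: "nondeg n (Mab a b n) C'" if "C' \<in> perm_class n C" for C'
      using that nondeg_perm[OF _ Cc nd] unfolding pc by blast
    show "\<exists>a b. a \<noteq> 0 \<and> a + of_nat n * b \<noteq> 0 \<and>
      (\<forall>C'\<in>perm_class n C. M_LCD n (Mab a b n) C') \<and>
      (\<forall>C1\<in>perm_class n C. \<forall>C2\<in>perm_class n C.
          perm_equiv n C1 C2 = proj_equiv n (proj n (Mab a b n) C1) (proj n (Mab a b n) C2))"
    proof (intro exI conjI ballI)
      show "a \<noteq> 0" "a + of_nat n * b \<noteq> 0" by (fact ab)+
      fix C' assume "C' \<in> perm_class n C"
      thus "M_LCD n (Mab a b n) C'" using cls ndc mlcd by blast
    next
      fix C1 C2 assume h1: "C1 \<in> perm_class n C" and h2: "C2 \<in> perm_class n C"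
      obtain G1 where "gen_matrix n k G1 C1" using cls h1 by blast
      moreover obtain G2 where "gen_matrix n k G2 C2" using cls h2 by blast
      ultimately show "perm_equiv n C1 C2 = proj_equiv n (proj n (Mab a b n) C1) (proj n (Mab a b n) C2)"
        using equiv_iff ndc h1 h2 by blast
    qed
  qed
qed

lemma hull_mem: "z \<in> code_hull n C \<longleftrightarrow> z \<in> C \<and> z \<in> carrier_vec n \<and> (\<forall>x\<in>C. x \<bullet> z = 0)"
  unfolding code_hull_def dual_code_def by auto

lemma hull_minus:
  assumes g: "gen_matrix n k G C" and x: "x \<in> code_hull n C" and y: "y \<in> code_hull n C"
  shows "x - y \<in> code_hull n C"
proof -
  have Cc: "C \<subseteq> carrier_vec n" by (rule gen_sub[OF g])
  have xc: "x \<in> carrier_vec n" and yc: "y \<in> carrier_vec n" using x y hull_mem by auto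
  have "\<forall>c\<in>C. c \<bullet> (x - y) = 0"
  proof
    fix c assume c: "c \<in> C"
    hence cc: "c \<in> carrier_vec n" using Cc by auto
    show "c \<bullet> (x - y) = 0" using scalar_prod_minus_distrib[OF cc xc yc] x y c
      unfolding hull_mem by auto
  qed
  moreover have "x \<in> C" "y \<in> C" using x y unfolding hull_mem by auto
  ultimately show ?thesis unfolding hull_mem using gen_minus[OF g] xc yc by auto
qed

lemma hull_smult:
  assumes g: "gen_matrix n k G C" and x: "x \<in> code_hull n C"
  shows "t \<cdot>\<^sub>v x \<in> code_hull n C"
proof -
  have Cc: "C \<subseteq> carrier_vec n" by (rule gen_sub[OF g])
  have xc: "x \<in> carrier_vec n" using x hull_mem by auto
  have "\<forall>c\<in>C. c \<bullet> (t \<cdot>\<^sub>v x) = 0"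
  proof
    fix c assume c: "c \<in> C"
    hence cc: "c \<in> carrier_vec n" using Cc by auto
    show "c \<bullet> (t \<cdot>\<^sub>v x) = 0" using scalar_prod_smult_distrib[OF cc xc] x c
      unfolding hull_mem by auto
  qed
  moreover have "x \<in> C" using x unfolding hull_mem by auto
  ultimately show ?thesis unfolding hull_mem using gen_smult[OF g] xc by auto
qed

lemma row_mult_1:
  assumes G: "G \<in> carrier_mat 1 n" and u: "u \<in> carrier_vec 1"
  shows "row_mult u G = (u $ 0) \<cdot>\<^sub>v row G 0"
proof (rule eq_vecI)
  fix j assume "j < dim_vec ((u $ 0) \<cdot>\<^sub>v row G 0)"
  hence j: "j < n" using G by auto
  show "row_mult u G $ j = ((u $ 0) \<cdot>\<^sub>v row G 0) $ j"
    unfolding row_mult_def using G u j by (simp add: scalar_prod_def mult.commute)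
qed (use G u in \<open>auto simp: row_mult_def\<close>)

lemma core:
  fixes C :: "'a::field vec set"
  assumes lc: "linear_code n k C"
  shows "(\<exists>a b. a \<noteq> 0 \<and> a + of_nat n * b \<noteq> 0 \<and> nondeg n (Mab a b n) C) \<longleftrightarrow>
    (LCD n C \<or> (linear_code n 1 (code_hull n C) \<and> (\<exists>x\<in>code_hull n C. x \<bullet> ones_vec n \<noteq> 0)))"
proof -
  obtain G where g: "gen_matrix n k G C" using lc unfolding linear_code_def by auto
  have Cc: "C \<subseteq> carrier_vec n" using gen_sub[OF g] .
  have z: "0\<^sub>v n \<in> code_hull n C" unfolding hull_mem using gen_zero[OF g] Cc by auto
  have ndf: "nondeg n (Mab a b n) C \<longleftrightarrow> (\<forall>y\<in>C. (\<forall>x\<in>C. a * (x \<bullet> y) + b * ((x \<bullet> ones_vec n) * (y \<bullet> ones_vec n)) = 0) \<longrightarrow> y = 0\<^sub>v n)"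
    for a b
  proof -
    have eqf: "\<And>x y. x \<in> C \<Longrightarrow> y \<in> C \<Longrightarrow> x \<bullet> (Mab a b n *\<^sub>v y) = a * (x \<bullet> y) + b * ((x \<bullet> ones_vec n) * (y \<bullet> ones_vec n))"
      using Mab_form Cc by blast
    show ?thesis unfolding nondeg_def by (simp add: eqf cong: ball_cong)
  qed
  show ?thesis
  proof
    assume "\<exists>a b. a \<noteq> 0 \<and> a + of_nat n * b \<noteq> 0 \<and> nondeg n (Mab a b n) C"
    then obtain a b where a: "a \<noteq> 0" and nd: "nondeg n (Mab a b n) C" by blast
    have A: "z = 0\<^sub>v n" if zh: "z \<in> code_hull n C" and z1: "z \<bullet> ones_vec n = 0" for z
    proof -
      have "z \<in> C" "\<forall>x\<in>C. x \<bullet> z = 0" using zh hull_mem by auto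
      thus ?thesis using nd z1 unfolding ndf by auto
    qed
    show "LCD n C \<or> (linear_code n 1 (code_hull n C) \<and> (\<exists>x\<in>code_hull n C. x \<bullet> ones_vec n \<noteq> 0))"
    proof (cases "LCD n C")
      case False
      then obtain h where hh: "h \<in> code_hull n C" and h0: "h \<noteq> 0\<^sub>v n"
        unfolding LCD_def using z by blast
      have hc: "h \<in> carrier_vec n" using hh hull_mem by auto
      have h1: "h \<bullet> ones_vec n \<noteq> 0" using A hh h0 by blast
      define H where "H = mat 1 n (\<lambda>(i,j). h $ j)"
      have H: "H \<in> carrier_mat 1 n" unfolding H_def by auto
      have rowH: "row H 0 = h" unfolding H_def using hc by (auto intro!: eq_vecI)
      have rmH: "row_mult u H = (u $ 0) \<cdot>\<^sub>v h" if "u \<in> carrier_vec 1" for u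
        using row_mult_1[OF H that] rowH by simp
      obtain j where j: "j < n" "h $ j \<noteq> 0" using h0 hc by (metis eq_vecI carrier_vecD index_zero_vec(1,2))
      have "inj_on (\<lambda>u. row_mult u H) (carrier_vec 1)"
      proof (rule inj_onI)
        fix u v :: "'a vec" assume u: "u \<in> carrier_vec 1" and v: "v \<in> carrier_vec 1"
          and "row_mult u H = row_mult v H"
        hence "((u $ 0) \<cdot>\<^sub>v h) $ j = ((v $ 0) \<cdot>\<^sub>v h) $ j" using rmH by simp
        hence "u $ 0 = v $ 0" using j hc by simp
        thus "u = v" using u v by (auto intro!: eq_vecI)
      qed
      moreover have "(\<lambda>u. row_mult u H) ` carrier_vec 1 = code_hull n C"
      proof
        show "(\<lambda>u. row_mult u H) ` carrier_vec 1 \<subseteq> code_hull n C"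
          using rmH hull_smult[OF g hh] by auto
        show "code_hull n C \<subseteq> (\<lambda>u. row_mult u H) ` carrier_vec 1"
        proof
          fix y assume yh: "y \<in> code_hull n C"
          have yc: "y \<in> carrier_vec n" using yh hull_mem by auto
          define t where "t = (y \<bullet> ones_vec n) / (h \<bullet> ones_vec n)"
          have d: "y - t \<cdot>\<^sub>v h \<in> code_hull n C" by (rule hull_minus[OF g yh hull_smult[OF g hh]])
          have "(y - t \<cdot>\<^sub>v h) \<bullet> ones_vec n = y \<bullet> ones_vec n - t * (h \<bullet> ones_vec n)"
            using minus_scalar_prod_distrib[OF yc _ ones_carrier, of "t \<cdot>\<^sub>v h"] hc by simp
          also have "\<dots> = 0" unfolding t_def using h1 by simp
          finally have "y - t \<cdot>\<^sub>v h = 0\<^sub>v n" using A d by blast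
          hence "y = t \<cdot>\<^sub>v h" using vec_minus_eq0[OF yc] hc by auto
          also have "\<dots> = row_mult (vec 1 (\<lambda>_. t)) H" using rmH[of "vec 1 (\<lambda>_. t)"] by simp
          finally show "y \<in> (\<lambda>u. row_mult u H) ` carrier_vec 1" by auto
        qed
      qed
      ultimately have "linear_code n 1 (code_hull n C)"
        unfolding linear_code_def gen_matrix_def using H by blast
      thus ?thesis using hh h1 by blast
    qed simp
  next
    assume "LCD n C \<or> (linear_code n 1 (code_hull n C) \<and> (\<exists>x\<in>code_hull n C. x \<bullet> ones_vec n \<noteq> 0))"
    thus "\<exists>a b. a \<noteq> 0 \<and> a + of_nat n * b \<noteq> 0 \<and> nondeg n (Mab a b n) C"
    proof
      assume L: "LCD n C"
      have "nondeg n (Mab 1 0 n) C" unfolding ndf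
      proof (intro ballI impI)
        fix y assume y: "y \<in> C" and "\<forall>x\<in>C. 1 * (x \<bullet> y) + 0 * ((x \<bullet> ones_vec n) * (y \<bullet> ones_vec n)) = 0"
        hence "y \<in> code_hull n C" unfolding hull_mem using Cc by auto
        thus "y = 0\<^sub>v n" using L unfolding LCD_def by auto
      qed
      thus ?thesis by (intro exI[of _ 1] exI[of _ 0]) auto
    next
      assume "linear_code n 1 (code_hull n C) \<and> (\<exists>x\<in>code_hull n C. x \<bullet> ones_vec n \<noteq> 0)"
      then obtain H h where gH: "gen_matrix n 1 H (code_hull n C)" and hh: "h \<in> code_hull n C"
        and h1: "h \<bullet> ones_vec n \<noteq> 0" unfolding linear_code_def by blast
      have H: "H \<in> carrier_mat 1 n" and HC: "code_hull n C = (\<lambda>u. row_mult u H) ` carrier_vec 1"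
        using gH unfolding gen_matrix_def by auto
      have span: "\<exists>t. y = t \<cdot>\<^sub>v row H 0" if "y \<in> code_hull n C" for y
        using that HC row_mult_1[OF H] by auto
      have hC: "h \<in> C" and hc: "h \<in> carrier_vec n" and hd: "\<forall>x\<in>C. x \<bullet> h = 0"
        using hh hull_mem by auto
      have rc: "row H 0 \<in> carrier_vec n" using H by auto
      obtain b :: 'a where b0: "b \<noteq> 0" and b1: "1 + of_nat n * b \<noteq> 0"
      proof (rule ccontr)
        assume "\<not> thesis"
        with that have all: "\<And>b::'a. b \<noteq> 0 \<Longrightarrow> 1 + of_nat n * b = 0" by blast
        have n1: "1 + (of_nat n :: 'a) = 0" using all[of 1] by simp
        have bin: "c = 0 \<or> c = 1" for c :: 'a
        proof (rule ccontr)
          assume "\<not> (c = 0 \<or> c = 1)"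
          hence "c \<noteq> 0" "c \<noteq> 1" by auto
          have "1 + of_nat n * c = 1 + (of_nat n :: 'a)" using all[OF \<open>c \<noteq> 0\<close>] n1 by simp
          hence "of_nat n * c = (of_nat n :: 'a) * 1" by simp
          moreover have "(of_nat n :: 'a) \<noteq> 0" using n1 by auto
          ultimately show False using \<open>c \<noteq> 1\<close> by simp
        qed
        have sq: "c * c = c" for c :: 'a using bin[of c] by auto
        have "h \<bullet> ones_vec n = h \<bullet> h"
          unfolding scalar_prod_def ones_vec_def using hc sq by (auto intro!: sum.cong)
        also have "\<dots> = 0" using hd hC by auto
        finally show False using h1 by simp
      qed
      have "nondeg n (Mab 1 b n) C" unfolding ndf
      proof (intro ballI impI)
        fix y assume y: "y \<in> C" and hy: "\<forall>x\<in>C. 1 * (x \<bullet> y) + b * ((x \<bullet> ones_vec n) * (y \<bullet> ones_vec n)) = 0"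
        have yc: "y \<in> carrier_vec n" using y Cc by auto
        have "h \<bullet> y = 0" using comm_scalar_prod[OF hc yc] hd y by simp
        hence "b * ((h \<bullet> ones_vec n) * (y \<bullet> ones_vec n)) = 0" using hy hC by force
        hence y1: "y \<bullet> ones_vec n = 0" using b0 h1 by simp
        hence "y \<in> code_hull n C" unfolding hull_mem using hy y yc by auto
        then obtain t where t: "y = t \<cdot>\<^sub>v row H 0" using span by blast
        obtain s where s: "h = s \<cdot>\<^sub>v row H 0" using span hh by blast
        have "s * (row H 0 \<bullet> ones_vec n) \<noteq> 0" using h1 s rc by simp
        moreover have "t * (row H 0 \<bullet> ones_vec n) = 0" using y1 t rc by simp
        ultimately have "t = 0" by auto
        thus "y = 0\<^sub>v n" using t rc H by (auto intro!: eq_vecI)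
      qed
      thus ?thesis using b1 by (intro exI[of _ 1] exI[of _ b]) auto
    qed
  qed
qed

theorem mainTheorem2:
  fixes C :: "'a::{field,finite} vec set" and n k :: nat
  assumes "linear_code n k C"
  shows "GI_reducible n C \<longleftrightarrow>
           (LCD n C \<or>
            (linear_code n 1 (code_hull n C) \<and> (\<exists>x\<in>code_hull n C. x \<bullet> ones_vec n \<noteq> 0)))"
  using GI_iff[OF assms] core[OF assms] by simp

end
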